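(* Let $\langle \mathcal{N},\mathcal{S},\mathcal{A},P,r,\gamma\rangle$ be a Markov game as described in the context. Let $G_d=(\mathcal{N},\mathcal{E}_d)$ be a directed acyclic graph whose vertex labels follow a topological order, and let $\pi$ be a (possibly stochastic) joint policy associated with $G_d$ that is $G_d$-locally optimal. Let $G_c=(\mathcal{N},\mathcal{E}_c)$ be a coordination graph of the state-action value function $Q^{\pi}$. If $$N_d(i)=N_c(i^{[+]})\quad\text{for all } i\in\mathcal{N},$$ then $\pi$ is globally optimal, i.e. $V^{\pi}(s)=V^*(s)$ for all $s\in\mathcal{S}$.
   Context: A Markov game is a tuple $\langle \mathcal{N},\mathcal{S},\mathcal{A},P,r,\gamma\rangle$ with agents $\mathcal{N}=\{1,\dots,n\}$, finite state space $\mathcal{S}$, joint action space $\mathcal{A}=\prod_{i=1}^n\mathcal{A}_i$ with each $\mathcal{A}_i$ finite, transition kernel $P(s'|s,a)$, reward $r:\mathcal{S}\times\mathcal{A}\to\mathbb{R}$ and discount $\gamma\in[0,1)$. For a joint policy $\pi$ (mapping states to distributions over $\mathcal{A}$), $V^{\pi}(s)=\mathbb{E}[\sum_{t\ge0}\gamma^t r(s^t,a^t)\mid s^0=s]$ with $a^t\sim\pi(\cdot|s^t)$, $Q^{\pi}(s,a)$ is the same expectation conditioned additionally on $a^0=a$, and $V^*=\max_\pi V^\pi$ is the optimal value function (the unique fixed point of $TV(s)=\max_a[r(s,a)+\gamma\sum_{s'}P(s'|s,a)V(s')]$). Notation: for $S\subseteq\mathcal{N}$, $-S=\mathcal{N}\setminus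 S$, $-i=-\{i\}$, $a_S=(a_j)_{j\in S}$, $\mathcal{A}_S=\prod_{j\in S}\mathcal{A}_j$; $i^-=\{1,\dots,i-1\}$, $i^+=\{i+1,\dots,n\}$, $i^{[+]}=\{i,\dots,n\}$. Coordination graph (CG): an undirected graph $G_c=(\mathcal{N},\mathcal{E}_c)$ is a CG of a function $Q:\mathcal{S}\times\mathcal{A}\to\mathbb{R}$ if there exist functions $Q_{ij}:\mathcal{S}\times\mathcal{A}_i\times\mathcal{A}_j\to\mathbb{R}$ for each edge $(i,j)\in\mathcal{E}_c$ and $Q_i:\mathcal{S}\times\mathcal{A}_i\to\mathbb{R}$ for each $i\in\mathcal{N}$ such that $Q(s,a)=\sum_{i}Q_i(s,a_i)+\sum_{(i,j)\in\mathcal{E}_c}Q_{ij}(s,a_i,a_j)$. (The paper assumes w.l.o.g. $G_c$ connected, so that $Q(s,a)=\sum_{(i,j)\in\mathcal{E}_c}Q_{ij}(s,a_i,a_j)$.) $N_c(i)$ denotes the neighbors of $i$ in $G_c$, and for $S\subseteq\mathcal{N}$, $N_c(S)=(\bigcup_{i\in S}N_c(i))\setminus S$. Action dependency graph (ADG): a directed acyclic graph $G_d=(\mathcal{N},\mathcal{E}_d)$; $N_d(i)=\{j:(j,i)\in\mathcal{E}_d\}$ and $N_d[i]=N_d(i)\cup\{i\}$. Agents are indexed in a topological order, i.e. $j<i$ for all $j\in N_d(i)$. A joint policy $\pi$ is associated with $G_d$ if $\pi(a|s)=\prod_{i=1}^n\pi_i(a_i|s,a_{N_d(i)})$ with individual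 policies $\pi_i:\mathcal{S}\times\mathcal{A}_{N_d(i)}\to\Delta(\mathcal{A}_i)$. Expectation convention: for fixed $s$ and a fixed partial action $a_{N_d(i)}$, $\mathbb{E}_{\pi'_i,\pi_{-N_d[i]}}[\cdot]$ denotes the expectation when the remaining actions $a_j$, $j\notin N_d(i)$, are drawn in increasing order of index, $a_j\sim\pi_j(\cdot|s,a_{N_d(j)})$ for $j\neq i$ and $a_i\sim\pi'_i(\cdot|s,a_{N_d(i)})$ (using the fixed components and previously drawn ones); $\mathbb{E}_{\pi_{-N_d(i)}}$ is the same with $\pi'_i=\pi_i$. $G_d$-locally optimal: $\pi$ associated with $G_d$ is $G_d$-locally optimal if for all $i\in\mathcal{N}$, $s\in\mathcal{S}$, $a_{N_d(i)}\in\mathcal{A}_{N_d(i)}$: $\mathbb{E}_{\pi_{-N_d(i)}}[Q^{\pi}(s,a)]=\max_{\pi'_i(\cdot|s,a_{N_d(i)})}\mathbb{E}_{\pi'_i,\pi_{-N_d[i]}}[Q^{\pi}(s,a)]$, the maximum being over distributions on $\mathcal{A}_i$. *)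

theory Defs
  imports "HOL-Analysis.Analysis"
begin

(* Agents are 0,...,n-1 (agent k here = agent k+1 of the paper).
   A i : finite action set of agent i.  Joint actions: extensional functions on {..<n}. *)

definition joint_actions :: "nat \<Rightarrow> (nat \<Rightarrow> 'b set) \<Rightarrow> (nat \<Rightarrow> 'b) set" where
  "joint_actions n A = PiE {..<n} A"

definition is_distrib :: "'b set \<Rightarrow> ('b \<Rightarrow> real) \<Rightarrow> bool" where
  "is_distrib B p \<longleftrightarrow> (\<forall>b\<in>B. 0 \<le> p b) \<and> sum p B = 1"

definition markov_game ::
  "nat \<Rightarrow> (nat \<Rightarrow> 'b set) \<Rightarrow> ('s::finite \<Rightarrow> (nat \<Rightarrow> 'b) \<Rightarrow> 's \<Rightarrow> real) \<Rightarrow> real \<Rightarrow> bool" where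
  "markov_game n A P \<gamma> \<longleftrightarrow>
     (\<forall>i<n. finite (A i) \<and> A i \<noteq> {}) \<and>
     (\<forall>s. \<forall>a\<in>joint_actions n A. is_distrib UNIV (P s a)) \<and>
     0 \<le> \<gamma> \<and> \<gamma> < 1"

(* Action dependency graph: Ed is a set of directed edges (j,i), meaning j \<rightarrow> i;
   agents are indexed in a topological order (j < i), which makes Ed acyclic. *)
definition adg :: "nat \<Rightarrow> (nat \<times> nat) set \<Rightarrow> bool" where
  "adg n Ed \<longleftrightarrow> (\<forall>(j,i)\<in>Ed. j < i \<and> i < n)"

definition Nd :: "(nat \<times> nat) set \<Rightarrow> nat \<Rightarrow> nat set" where
  "Nd Ed i = {j. (j, i) \<in> Ed}"

(* Individual policies: pol i s x b = \<pi>_i(b | s, x) where x is the partial action a_{N_d(i)},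
   represented as an extensional function on N_d(i). *)
definition policy_assoc ::
  "nat \<Rightarrow> (nat \<Rightarrow> 'b set) \<Rightarrow> (nat \<times> nat) set \<Rightarrow> (nat \<Rightarrow> 's \<Rightarrow> (nat \<Rightarrow> 'b) \<Rightarrow> 'b \<Rightarrow> real) \<Rightarrow> bool" where
  "policy_assoc n A Ed pol \<longleftrightarrow>
     (\<forall>i<n. \<forall>s. \<forall>x\<in>PiE (Nd Ed i) A. is_distrib (A i) (pol i s x))"

definition joint_pol ::
  "nat \<Rightarrow> (nat \<times> nat) set \<Rightarrow> (nat \<Rightarrow> 's \<Rightarrow> (nat \<Rightarrow> 'b) \<Rightarrow> 'b \<Rightarrow> real) \<Rightarrow> 's \<Rightarrow> (nat \<Rightarrow> 'b) \<Rightarrow> real" where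
  "joint_pol n Ed pol s a = (\<Prod>j<n. pol j s (restrict a (Nd Ed j)) (a j))"

fun state_dist ::
  "nat \<Rightarrow> (nat \<Rightarrow> 'b set) \<Rightarrow> ('s::finite \<Rightarrow> (nat \<Rightarrow> 'b) \<Rightarrow> 's \<Rightarrow> real) \<Rightarrow>
   ('s \<Rightarrow> (nat \<Rightarrow> 'b) \<Rightarrow> real) \<Rightarrow> 's \<Rightarrow> nat \<Rightarrow> 's \<Rightarrow> real" where
  "state_dist n A P \<pi> s0 0 s = (if s = s0 then 1 else 0)"
| "state_dist n A P \<pi> s0 (Suc t) s' =
     (\<Sum>s\<in>UNIV. state_dist n A P \<pi> s0 t s * (\<Sum>a\<in>joint_actions n A. \<pi> s a * P s a s'))"

(* V^\<pi>(s0) = E[\<Sum>_t \<gamma>^t r(s^t,a^t)] = \<Sum>_t \<gamma>^t E[r(s^t,a^t)] *)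
definition Vpi ::
  "nat \<Rightarrow> (nat \<Rightarrow> 'b set) \<Rightarrow> ('s::finite \<Rightarrow> (nat \<Rightarrow> 'b) \<Rightarrow> 's \<Rightarrow> real) \<Rightarrow>
   ('s \<Rightarrow> (nat \<Rightarrow> 'b) \<Rightarrow> real) \<Rightarrow> real \<Rightarrow> ('s \<Rightarrow> (nat \<Rightarrow> 'b) \<Rightarrow> real) \<Rightarrow> 's \<Rightarrow> real" where
  "Vpi n A P r \<gamma> \<pi> s0 =
     (\<Sum>t. \<gamma> ^ t * (\<Sum>s\<in>UNIV. state_dist n A P \<pi> s0 t s *
                        (\<Sum>a\<in>joint_actions n A. \<pi> s a * r s a)))"

(* Q^\<pi>(s,a): same expectation conditioned on a^0 = a *)
definition Qpi ::
  "nat \<Rightarrow> (nat \<Rightarrow> 'b set) \<Rightarrow> ('s::finite \<Rightarrow> (nat \<Rightarrow> 'b) \<Rightarrow> 's \<Rightarrow> real) \<Rightarrow>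
   ('s \<Rightarrow> (nat \<Rightarrow> 'b) \<Rightarrow> real) \<Rightarrow> real \<Rightarrow> ('s \<Rightarrow> (nat \<Rightarrow> 'b) \<Rightarrow> real) \<Rightarrow> 's \<Rightarrow> (nat \<Rightarrow> 'b) \<Rightarrow> real" where
  "Qpi n A P r \<gamma> \<pi> s a = r s a + \<gamma> * (\<Sum>s'\<in>UNIV. P s a s' * Vpi n A P r \<gamma> \<pi> s')"

definition bellman_opt ::
  "nat \<Rightarrow> (nat \<Rightarrow> 'b set) \<Rightarrow> ('s::finite \<Rightarrow> (nat \<Rightarrow> 'b) \<Rightarrow> 's \<Rightarrow> real) \<Rightarrow>
   ('s \<Rightarrow> (nat \<Rightarrow> 'b) \<Rightarrow> real) \<Rightarrow> real \<Rightarrow> ('s \<Rightarrow> real) \<Rightarrow> 's \<Rightarrow> real" where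
  "bellman_opt n A P r \<gamma> V s =
     Max ((\<lambda>a. r s a + \<gamma> * (\<Sum>s'\<in>UNIV. P s a s' * V s')) ` joint_actions n A)"

definition Vstar ::
  "nat \<Rightarrow> (nat \<Rightarrow> 'b set) \<Rightarrow> ('s::finite \<Rightarrow> (nat \<Rightarrow> 'b) \<Rightarrow> 's \<Rightarrow> real) \<Rightarrow>
   ('s \<Rightarrow> (nat \<Rightarrow> 'b) \<Rightarrow> real) \<Rightarrow> real \<Rightarrow> 's \<Rightarrow> real" where
  "Vstar n A P r \<gamma> = (THE V. \<forall>s. V s = bellman_opt n A P r \<gamma> V s)"

(* E_{\<pi>'_i, \<pi>_{-N_d[i]}}[f(a)] for fixed s and fixed partial action x = a_{N_d(i)},
   where agent i uses the distribution q and agents j \<notin> N_d[i] use \<pi>_j. *)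
definition exp_dev ::
  "nat \<Rightarrow> (nat \<Rightarrow> 'b set) \<Rightarrow> (nat \<times> nat) set \<Rightarrow> (nat \<Rightarrow> 's \<Rightarrow> (nat \<Rightarrow> 'b) \<Rightarrow> 'b \<Rightarrow> real) \<Rightarrow>
   's \<Rightarrow> nat \<Rightarrow> (nat \<Rightarrow> 'b) \<Rightarrow> ('b \<Rightarrow> real) \<Rightarrow> ((nat \<Rightarrow> 'b) \<Rightarrow> real) \<Rightarrow> real" where
  "exp_dev n A Ed pol s i x q f =
     (\<Sum>a\<in>{a\<in>joint_actions n A. \<forall>j\<in>Nd Ed i. a j = x j}.
        (q (a i) * (\<Prod>j\<in>{..<n} - Nd Ed i - {i}. pol j s (restrict a (Nd Ed j)) (a j))) * f a)"

definition locally_optimal ::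
  "nat \<Rightarrow> (nat \<Rightarrow> 'b set) \<Rightarrow> (nat \<times> nat) set \<Rightarrow> (nat \<Rightarrow> 's \<Rightarrow> (nat \<Rightarrow> 'b) \<Rightarrow> 'b \<Rightarrow> real) \<Rightarrow>
   ('s \<Rightarrow> (nat \<Rightarrow> 'b) \<Rightarrow> real) \<Rightarrow> bool" where
  "locally_optimal n A Ed pol Q \<longleftrightarrow>
     (\<forall>i<n. \<forall>s. \<forall>x\<in>PiE (Nd Ed i) A.
        exp_dev n A Ed pol s i x (pol i s x) (Q s) =
        (SUP q\<in>{q. is_distrib (A i) q}. exp_dev n A Ed pol s i x q (Q s)))"

(* Undirected graph on {..<n}: Ec is a set of pairs without self loops; the edge {i,j}
   may be listed as (i,j) or (j,i). *)
definition ugraph :: "nat \<Rightarrow> (nat \<times> nat) set \<Rightarrow> bool" where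
  "ugraph n Ec \<longleftrightarrow> (\<forall>(i,j)\<in>Ec. i \<noteq> j \<and> i < n \<and> j < n)"

definition Nc :: "(nat \<times> nat) set \<Rightarrow> nat \<Rightarrow> nat set" where
  "Nc Ec i = {j. (i, j) \<in> Ec \<or> (j, i) \<in> Ec}"

definition Nc_set :: "(nat \<times> nat) set \<Rightarrow> nat set \<Rightarrow> nat set" where
  "Nc_set Ec S = (\<Union>i\<in>S. Nc Ec i) - S"

definition is_coord_graph ::
  "nat \<Rightarrow> (nat \<Rightarrow> 'b set) \<Rightarrow> (nat \<times> nat) set \<Rightarrow> ('s \<Rightarrow> (nat \<Rightarrow> 'b) \<Rightarrow> real) \<Rightarrow> bool" where
  "is_coord_graph n A Ec Q \<longleftrightarrow>
     (\<exists>Qi :: nat \<Rightarrow> 's \<Rightarrow> 'b \<Rightarrow> real. \<exists>Qij :: nat \<Rightarrow> nat \<Rightarrow> 's \<Rightarrow> 'b \<Rightarrow> 'b \<Rightarrow> real.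
       \<forall>s. \<forall>a\<in>joint_actions n A.
         Q s a = (\<Sum>i<n. Qi i s (a i)) + (\<Sum>(i,j)\<in>Ec. Qij i j s (a i) (a j)))"

end

theory Submission imports Defs begin

definition ovr :: "nat set \<Rightarrow> (nat \<Rightarrow> 'b) \<Rightarrow> (nat \<Rightarrow> 'b) \<Rightarrow> nat \<Rightarrow> 'b" where
  "ovr K a b = (\<lambda>j. if j \<in> K then b j else a j)"

definition Exq :: "(nat \<Rightarrow> 'b set) \<Rightarrow> nat set \<Rightarrow> (nat \<Rightarrow> 'b) \<Rightarrow>
   (nat \<Rightarrow> (nat \<Rightarrow> 'b) \<Rightarrow> 'b \<Rightarrow> real) \<Rightarrow> ((nat \<Rightarrow> 'b) \<Rightarrow> real) \<Rightarrow> real" where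
  "Exq A K a g f = (\<Sum>b\<in>PiE K A. (\<Prod>k\<in>K. g k (ovr K a b) (b k)) * f (ovr K a b))"

definition dep_lt :: "(nat \<Rightarrow> (nat \<Rightarrow> 'b) \<Rightarrow> 'b \<Rightarrow> real) \<Rightarrow> nat \<Rightarrow> bool" where
  "dep_lt g m \<longleftrightarrow> (\<forall>a a'. (\<forall>j<m. a j = a' j) \<longrightarrow> g m a = g m a')"

lemma sum_PiE_insert:
  assumes "m \<notin> K"
  shows "(\<Sum>b\<in>PiE (insert m K) A. h b) = (\<Sum>c\<in>A m. \<Sum>b\<in>PiE K A. h (b(m:=c)))"
proof -
  have "(\<Sum>b\<in>PiE (insert m K) A. h b) = (\<Sum>p\<in>A m \<times> PiE K A. h ((\<lambda>(y, g). g(m := y)) p))"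
    unfolding PiE_insert_eq using inj_combinator[OF assms, of A]
    by (simp add: sum.reindex)
  also have "\<dots> = (\<Sum>c\<in>A m. \<Sum>b\<in>PiE K A. h (b(m:=c)))"
    by (subst sum.cartesian_product) (auto intro!: sum.cong)
  finally show ?thesis .
qed

lemma Exq_empty[simp]: "Exq A {} a g f = f a"
  by (simp add: Exq_def ovr_def)

lemma Exq_peel:
  assumes "m \<notin> K" "\<forall>k\<in>K. m < k" "dep_lt g m" "finite K"
  shows "Exq A (insert m K) a g f = (\<Sum>c\<in>A m. g m a c * Exq A K (a(m:=c)) g f)"
proof -
  have ov: "ovr (insert m K) a (b(m:=c)) = ovr K (a(m:=c)) b" for b c
    using assms(1) by (auto simp: ovr_def)
  have gm: "g m (ovr K (a(m:=c)) b) = g m a" for b c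
  proof -
    have "\<forall>j<m. ovr K (a(m:=c)) b j = a j" using assms(2) by (auto simp: ovr_def)
    then show ?thesis using assms(3) unfolding dep_lt_def by blast
  qed
  have pr: "(\<Prod>k\<in>insert m K. g k (ovr K (a(m:=c)) b) ((b(m:=c)) k))
      = g m a c * (\<Prod>k\<in>K. g k (ovr K (a(m:=c)) b) (b k))" for b c
  proof -
    have "(\<Prod>k\<in>K. g k (ovr K (a(m:=c)) b) ((b(m:=c)) k)) = (\<Prod>k\<in>K. g k (ovr K (a(m:=c)) b) (b k))"
      by (rule prod.cong) (use assms(1) in auto)
    then show ?thesis using assms(1,4) gm by simp
  qed
  show ?thesis
    unfolding Exq_def sum_PiE_insert[OF assms(1)] ov pr
    by (simp add: sum_distrib_left mult.assoc)
qed

lemma Exq_cong_f: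
  assumes "\<And>b. b \<in> PiE K A \<Longrightarrow> f (ovr K a b) = f' (ovr K a b)"
  shows "Exq A K a g f = Exq A K a g f'"
  unfolding Exq_def by (rule sum.cong) (use assms in auto)

lemma Exq_cong_g:
  assumes "\<And>k. k \<in> K \<Longrightarrow> g k = g' k"
  shows "Exq A K a g f = Exq A K a g' f"
  unfolding Exq_def using assms by (auto intro!: sum.cong prod.cong)

lemma Exq_add: "Exq A K a g (\<lambda>x. f1 x + f2 x) = Exq A K a g f1 + Exq A K a g f2"
  unfolding Exq_def by (simp add: distrib_left sum.distrib)

lemma Exq_cmult: "Exq A K a g (\<lambda>x. c * f x) = c * Exq A K a g f"
  unfolding Exq_def by (simp add: sum_distrib_left mult.assoc mult.left_commute)

lemma Exq_mass:
  assumes "finite K" "K \<subseteq> {..<n}" "a \<in> PiE {..<n} A"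
    and "\<And>k. k \<in> K \<Longrightarrow> dep_lt g k"
    and "\<And>k a. k \<in> K \<Longrightarrow> a \<in> PiE {..<n} A \<Longrightarrow> is_distrib (A k) (g k a)"
  shows "Exq A K a g (\<lambda>_. 1) = 1"
  using assms
proof (induction K arbitrary: a rule: finite_linorder_min_induct)
  case empty
  then show ?case by simp
next
  case (insert m K)
  have mK: "m \<notin> K" using insert.hyps by auto
  have "Exq A (insert m K) a g (\<lambda>_. 1) = (\<Sum>c\<in>A m. g m a c * Exq A K (a(m:=c)) g (\<lambda>_. 1))"
    by (rule Exq_peel) (use insert.hyps insert.prems mK in auto)
  also have "\<dots> = (\<Sum>c\<in>A m. g m a c * 1)"
  proof (rule sum.cong)
    fix c assume c: "c \<in> A m"
    have "a(m:=c) \<in> PiE {..<n} A"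
      using insert.prems c by (auto simp: PiE_def Pi_def extensional_def)
    then have "Exq A K (a(m:=c)) g (\<lambda>_. 1) = 1"
      apply (intro insert.IH) using insert.prems insert.hyps by auto
    then show "g m a c * Exq A K (a(m:=c)) g (\<lambda>_. 1) = g m a c * 1" by simp
  qed simp
  also have "\<dots> = (\<Sum>c\<in>A m. g m a c)" by simp
  also have "\<dots> = 1" using insert.prems(4)[of m a] insert.prems(2) by (simp add: is_distrib_def)
  finally show ?case .
qed

lemma Exq_chain:
  assumes "finite K1" "finite K2" "\<forall>k1\<in>K1. \<forall>k2\<in>K2. k1 < k2" "\<And>k. k \<in> K1 \<Longrightarrow> dep_lt g k"
  shows "Exq A (K1 \<union> K2) a g f = Exq A K1 a g (\<lambda>a'. Exq A K2 a' g f)"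
  using assms
proof (induction K1 arbitrary: a rule: finite_linorder_min_induct)
  case empty
  then show ?case by simp
next
  case (insert m K1)
  have m1: "m \<notin> K1" using insert.hyps by auto
  have m2: "m \<notin> K1 \<union> K2" using insert.hyps insert.prems by auto
  have "Exq A (insert m K1 \<union> K2) a g f = Exq A (insert m (K1 \<union> K2)) a g f" by simp
  also have "\<dots> = (\<Sum>c\<in>A m. g m a c * Exq A (K1 \<union> K2) (a(m:=c)) g f)"
    by (rule Exq_peel) (use insert.hyps insert.prems m2 in auto)
  also have "\<dots> = (\<Sum>c\<in>A m. g m a c * Exq A K1 (a(m:=c)) g (\<lambda>a'. Exq A K2 a' g f))"
    apply (intro sum.cong refl arg_cong2[where f="(*)"])
    apply (rule insert.IH) using insert.prems insert.hyps by auto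
  also have "\<dots> = Exq A (insert m K1) a g (\<lambda>a'. Exq A K2 a' g f)"
    by (rule Exq_peel[symmetric]) (use insert.hyps insert.prems m1 in auto)
  finally show ?case .
qed


context
  fixes n :: nat and A :: "nat \<Rightarrow> 'b set" and Ed Ec :: "(nat\<times>nat) set"
    and pol :: "nat \<Rightarrow> 's \<Rightarrow> (nat \<Rightarrow> 'b) \<Rightarrow> 'b \<Rightarrow> real" and s :: 's
    and Qi :: "nat \<Rightarrow> 'b \<Rightarrow> real" and Qij :: "nat \<Rightarrow> nat \<Rightarrow> 'b \<Rightarrow> 'b \<Rightarrow> real"
  assumes finA: "\<forall>i<n. finite (A i) \<and> A i \<noteq> {}"
    and adg: "adg n Ed" and pa: "policy_assoc n A Ed pol" and ug: "ugraph n Ec"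
    and NdNc: "\<forall>i<n. Nd Ed i = Nc_set Ec {i..<n}"
begin

definition gp :: "nat \<Rightarrow> (nat \<Rightarrow> 'b) \<Rightarrow> 'b \<Rightarrow> real" where
  "gp k a c = pol k s (restrict a (Nd Ed k)) c"

definition T :: "nat \<Rightarrow> (nat \<Rightarrow> 'b) \<Rightarrow> real" where
  "T k a = Qi k (a k) + (\<Sum>e\<in>{e\<in>Ec. max (fst e) (snd e) = k}. Qij (fst e) (snd e) (a (fst e)) (a (snd e)))"

definition F :: "nat \<Rightarrow> (nat \<Rightarrow> 'b) \<Rightarrow> real" where
  "F i a = (\<Sum>k\<in>{i..<n}. T k a)"

primrec Mrec :: "nat \<Rightarrow> (nat \<Rightarrow> 'b) \<Rightarrow> real" where
  "Mrec 0 a = 0"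
| "Mrec (Suc d) a = Max ((\<lambda>c. T (n - Suc d) (a(n - Suc d := c)) + Mrec d (a(n - Suc d := c))) ` A (n - Suc d))"

definition M :: "nat \<Rightarrow> (nat \<Rightarrow> 'b) \<Rightarrow> real" where
  "M i a = Mrec (n - i) a"

definition H :: "nat \<Rightarrow> (nat \<Rightarrow> 'b) \<Rightarrow> 'b \<Rightarrow> real" where
  "H i a c = T i (a(i:=c)) + M (Suc i) (a(i:=c))"

lemma M_step: "i < n \<Longrightarrow> M i a = Max (H i a ` A i)"
proof -
  assume i: "i < n"
  have e1: "n - i = Suc (n - Suc i)" using i by simp
  have e2: "n - Suc (n - Suc i) = i" using i by simp
  show ?thesis unfolding M_def H_def e1 Mrec.simps e2 by simp
qed

lemma M_n[simp]: "M n a = 0"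
  by (simp add: M_def)

lemma F_n[simp]: "F n a = 0"
  by (simp add: F_def)

lemma F_step: "i < n \<Longrightarrow> F i a = T i a + F (Suc i) a"
  unfolding F_def by (subst sum.atLeast_Suc_lessThan) auto

lemma T_local:
  assumes "\<And>j. j = k \<or> (j \<in> Nc Ec k \<and> j < k) \<Longrightarrow> a j = a' j"
  shows "T k a = T k a'"
proof -
  have "a (fst e) = a' (fst e) \<and> a (snd e) = a' (snd e)" if e: "e \<in> Ec" "max (fst e) (snd e) = k" for e
  proof -
    obtain p q where pq: "e = (p,q)" by (cases e)
    have "p \<noteq> q" using ug e(1) pq unfolding ugraph_def by auto
    moreover have "(p,q) \<in> Ec" using e pq by simp
    ultimately show ?thesis using e(2) pq assms[of p] assms[of q] unfolding Nc_def
      by (cases "p \<le> q") (auto simp: max_def)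
  qed
  then show ?thesis unfolding T_def using assms[of k]
    by (auto intro!: sum.cong)
qed

lemma T_le:
  assumes "\<And>j. j \<le> k \<Longrightarrow> a j = a' j"
  shows "T k a = T k a'"
  by (rule T_local) (use assms in auto)

lemma Ncset_1: "i < n \<Longrightarrow> j \<in> Nc Ec i \<Longrightarrow> j < i \<Longrightarrow> j \<in> Nc_set Ec {i..<n}"
  unfolding Nc_set_def by auto

lemma Ncset_2: "j \<in> Nc_set Ec {Suc i..<n} \<Longrightarrow> j \<noteq> i \<Longrightarrow> j \<in> Nc_set Ec {i..<n}"
  unfolding Nc_set_def by auto

lemma M_local:
  assumes "i \<le> n"
  shows "\<forall>a a'. (\<forall>j\<in>Nc_set Ec {i..<n}. a j = a' j) \<longrightarrow> M i a = M i a'"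
  using assms
proof (induction i rule: inc_induct)
  case base
  then show ?case by simp
next
  case (step i)
  show ?case
  proof (intro allI impI)
    fix a a' :: "nat \<Rightarrow> 'b" assume ag: "\<forall>j\<in>Nc_set Ec {i..<n}. a j = a' j"
    have "H i a c = H i a' c" for c
    proof -
      have "T i (a(i:=c)) = T i (a'(i:=c))"
        by (rule T_local) (use ag Ncset_1[OF step(2)] in auto)
      moreover have "M (Suc i) (a(i:=c)) = M (Suc i) (a'(i:=c))"
        using step.IH ag Ncset_2 by auto
      ultimately show ?thesis unfolding H_def by simp
    qed
    then show "M i a = M i a'" using M_step[OF step(2)] by simp
  qed
qed

lemma H_local:
  assumes "i < n" "\<forall>j\<in>Nc_set Ec {i..<n}. a j = a' j"
  shows "H i a c = H i a' c"
proof -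
  have "T i (a(i:=c)) = T i (a'(i:=c))"
    by (rule T_local) (use assms Ncset_1[OF assms(1)] in auto)
  moreover have "M (Suc i) (a(i:=c)) = M (Suc i) (a'(i:=c))"
    using M_local[of "Suc i"] assms Ncset_2 by auto
  ultimately show ?thesis unfolding H_def by simp
qed

lemma Nd_lt: "j \<in> Nd Ed k \<Longrightarrow> j < k"
  using adg unfolding adg_def Nd_def by auto

lemma gp_dep: "dep_lt gp k"
  unfolding dep_lt_def gp_def
proof (intro allI impI)
  fix a a' :: "nat \<Rightarrow> 'b" assume "\<forall>j<k. a j = a' j"
  then have "restrict a (Nd Ed k) = restrict a' (Nd Ed k)"
    using Nd_lt by (auto simp: restrict_def)
  then show "(\<lambda>c. pol k s (restrict a (Nd Ed k)) c) = (\<lambda>c. pol k s (restrict a' (Nd Ed k)) c)" by simp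
qed

lemma restrict_in: "k < n \<Longrightarrow> a \<in> PiE {..<n} A \<Longrightarrow> restrict a (Nd Ed k) \<in> PiE (Nd Ed k) A"
  using Nd_lt by (fastforce simp: PiE_def Pi_def)

lemma gp_distrib: "k < n \<Longrightarrow> a \<in> PiE {..<n} A \<Longrightarrow> is_distrib (A k) (gp k a)"
  using pa restrict_in unfolding policy_assoc_def gp_def by auto

lemma upd_in: "a \<in> PiE {..<n} A \<Longrightarrow> i < n \<Longrightarrow> c \<in> A i \<Longrightarrow> a(i:=c) \<in> PiE {..<n} A"
  by (auto simp: PiE_def Pi_def extensional_def)

lemma dep_upd: "k \<noteq> i \<Longrightarrow> dep_lt (gp(i:=gi)) k = dep_lt gp k"
  by (simp add: dep_lt_def)

lemma Hsum:
  assumes i: "i < n" and IH: "\<forall>a\<in>PiE {..<n} A. Exq A {Suc i..<n} a gp (F (Suc i)) = M (Suc i) a"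
    and a: "a \<in> PiE {..<n} A" and dep: "dep_lt (gp(i:=gi)) i"
  shows "Exq A {i..<n} a (gp(i:=gi)) (F i) = (\<Sum>c\<in>A i. gi a c * H i a c)"
proof -
  have ins: "{i..<n} = insert i {Suc i..<n}" using i by auto
  have "Exq A {i..<n} a (gp(i:=gi)) (F i) = (\<Sum>c\<in>A i. (gp(i:=gi)) i a c * Exq A {Suc i..<n} (a(i:=c)) (gp(i:=gi)) (F i))"
    unfolding ins by (rule Exq_peel) (use dep in auto)
  also have "\<dots> = (\<Sum>c\<in>A i. gi a c * H i a c)"
  proof (rule sum.cong[OF refl])
    fix c assume c: "c \<in> A i"
    have ac: "a(i:=c) \<in> PiE {..<n} A" using upd_in a c i by blast
    have "Exq A {Suc i..<n} (a(i:=c)) (gp(i:=gi)) (F i) = Exq A {Suc i..<n} (a(i:=c)) gp (F i)"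
      by (rule Exq_cong_g) auto
    also have "\<dots> = Exq A {Suc i..<n} (a(i:=c)) gp (\<lambda>x. T i (a(i:=c)) * 1 + F (Suc i) x)"
    proof (rule Exq_cong_f)
      fix b assume "b \<in> PiE {Suc i..<n} A"
      have "T i (ovr {Suc i..<n} (a(i:=c)) b) = T i (a(i:=c))"
        by (rule T_le) (auto simp: ovr_def)
      then show "F i (ovr {Suc i..<n} (a(i:=c)) b) = T i (a(i:=c)) * 1 + F (Suc i) (ovr {Suc i..<n} (a(i:=c)) b)"
        using F_step[OF i] by simp
    qed
    also have "\<dots> = T i (a(i:=c)) * Exq A {Suc i..<n} (a(i:=c)) gp (\<lambda>_. 1) + Exq A {Suc i..<n} (a(i:=c)) gp (F (Suc i))"
      using Exq_add[of A "{Suc i..<n}" "a(i:=c)" gp "\<lambda>x. T i (a(i:=c)) * 1" "F (Suc i)"]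
        Exq_cmult[of A "{Suc i..<n}" "a(i:=c)" gp "T i (a(i:=c))" "\<lambda>_. 1"] by simp
    also have "Exq A {Suc i..<n} (a(i:=c)) gp (\<lambda>_. 1) = 1"
      by (rule Exq_mass[of _ n]) (use ac gp_dep gp_distrib in auto)
    also have "Exq A {Suc i..<n} (a(i:=c)) gp (F (Suc i)) = M (Suc i) (a(i:=c))"
      using IH ac by blast
    finally have X: "Exq A {Suc i..<n} (a(i:=c)) (gp(i:=gi)) (F i) = T i (a(i:=c)) * 1 + M (Suc i) (a(i:=c))" .
    show "(gp(i:=gi)) i a c * Exq A {Suc i..<n} (a(i:=c)) (gp(i:=gi)) (F i) = gi a c * H i a c"
      by (simp only: H_def fun_upd_same X mult_1_right)
  qed
  finally show ?thesis .
qed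

lemma M_ge:
  assumes "i \<le> n"
  shows "\<forall>a\<in>PiE {..<n} A. \<forall>b. (\<forall>j\<in>{i..<n}. b j \<in> A j) \<longrightarrow> F i (ovr {i..<n} a b) \<le> M i a"
  using assms
proof (induction i rule: inc_induct)
  case base
  then show ?case by simp
next
  case (step i)
  show ?case
  proof (intro ballI allI impI)
    fix a b assume a: "a \<in> PiE {..<n} A" and b: "\<forall>j\<in>{i..<n}. b j \<in> A j"
    have bi: "b i \<in> A i" using b step(2) by auto
    have a': "a(i:=b i) \<in> PiE {..<n} A" using upd_in a bi step(2) by blast
    have ov: "ovr {i..<n} a b = ovr {Suc i..<n} (a(i:=b i)) b"
      using step(2) by (auto simp: ovr_def)
    have t: "T i (ovr {Suc i..<n} (a(i:=b i)) b) = T i (a(i:=b i))"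
      by (rule T_le) (auto simp: ovr_def)
    have f: "F (Suc i) (ovr {Suc i..<n} (a(i:=b i)) b) \<le> M (Suc i) (a(i:=b i))"
      using step.IH a' b by auto
    have "F i (ovr {i..<n} a b) \<le> H i a (b i)"
      unfolding F_step[OF step(2)] ov t H_def using f by simp
    also have "\<dots> \<le> Max (H i a ` A i)"
      using finA step(2) bi by (intro Max_ge) auto
    finally show "F i (ovr {i..<n} a b) \<le> M i a" using M_step[OF step(2)] by simp
  qed
qed


lemma F0_split: "i \<le> n \<Longrightarrow> F 0 a = (\<Sum>k<i. T k a) + F i a"
  unfolding F_def using sum.atLeastLessThan_concat[of 0 i n "\<lambda>k. T k a"]
  by (simp add: atLeast0LessThan)

lemma expdev:
  assumes i: "i < n" and IH: "\<forall>a\<in>PiE {..<n} A. Exq A {Suc i..<n} a gp (F (Suc i)) = M (Suc i) a"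
    and a: "a \<in> PiE {..<n} A" and q: "is_distrib (A i) q"
    and Qd: "\<forall>a\<in>PiE {..<n} A. Q a = F 0 a"
  shows "exp_dev n A Ed pol s i (restrict a (Nd Ed i)) q Q
     = Exq A ({..<i} - Nd Ed i) a gp (\<lambda>a'. \<Sum>k<i. T k a') + (\<Sum>c\<in>A i. q c * H i a c)"
proof -
  define K where "K = {..<n} - Nd Ed i"
  define K1 where "K1 = {..<i} - Nd Ed i"
  define x where "x = restrict a (Nd Ed i)"
  define g' where "g' = gp(i := (\<lambda>_ c. q c))"
  define L where "L = (\<lambda>a'. \<Sum>k<i. T k a')"
  have NdI: "Nd Ed i \<subseteq> {..<i}" using Nd_lt by auto
  have iK: "i \<in> K" using i NdI K_def by auto
  have finK: "finite K" unfolding K_def by simp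
  have ovin: "ovr K a b \<in> PiE {..<n} A" if "b \<in> PiE K A" for b
    using that a unfolding K_def by (auto simp: ovr_def PiE_def Pi_def extensional_def)
  have seteq: "{a'\<in>joint_actions n A. \<forall>j\<in>Nd Ed i. a' j = x j} = (\<lambda>b. ovr K a b) ` PiE K A"
  proof
    show "{a'\<in>joint_actions n A. \<forall>j\<in>Nd Ed i. a' j = x j} \<subseteq> (\<lambda>b. ovr K a b) ` PiE K A"
    proof
      fix a' assume "a' \<in> {a'\<in>joint_actions n A. \<forall>j\<in>Nd Ed i. a' j = x j}"
      then have a': "a' \<in> PiE {..<n} A" "\<forall>j\<in>Nd Ed i. a' j = x j"
        unfolding joint_actions_def by auto
      have "a' = ovr K a (restrict a' K)"
      proof
        fix j
        show "a' j = ovr K a (restrict a' K) j"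
        proof (cases "j \<in> K")
          case True then show ?thesis by (simp add: ovr_def)
        next
          case False
          show ?thesis
          proof (cases "j \<in> Nd Ed i")
            case True then show ?thesis using a' False by (simp add: ovr_def x_def)
          next
            case False2: False
            then have "j \<notin> {..<n}" using False K_def by auto
            then show ?thesis using a' a False by (auto simp: ovr_def PiE_def extensional_def)
          qed
        qed
      qed
      moreover have "restrict a' K \<in> PiE K A" using a' unfolding K_def by auto
      ultimately show "a' \<in> (\<lambda>b. ovr K a b) ` PiE K A" by blast
    qed
  next
    show "(\<lambda>b. ovr K a b) ` PiE K A \<subseteq> {a'\<in>joint_actions n A. \<forall>j\<in>Nd Ed i. a' j = x j}"
      using ovin unfolding joint_actions_def by (auto simp: ovr_def x_def K_def)
  qed
  have inj: "inj_on (\<lambda>b. ovr K a b) (PiE K A)"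
  proof (rule inj_onI)
    fix b b' assume b: "b \<in> PiE K A" "b' \<in> PiE K A" and e: "ovr K a b = ovr K a b'"
    show "b = b'"
    proof
      fix j show "b j = b' j"
      proof (cases "j \<in> K")
        case True then show ?thesis using fun_cong[OF e, of j] by (simp add: ovr_def)
      next
        case False then show ?thesis using b by (auto simp: PiE_def extensional_def)
      qed
    qed
  qed
  have wt: "q (ovr K a b i) * (\<Prod>j\<in>{..<n} - Nd Ed i - {i}. pol j s (restrict (ovr K a b) (Nd Ed j)) (ovr K a b j))
      = (\<Prod>k\<in>K. g' k (ovr K a b) (b k))" for b
  proof -
    have "(\<Prod>k\<in>K. g' k (ovr K a b) (b k)) = g' i (ovr K a b) (b i) * (\<Prod>k\<in>K - {i}. g' k (ovr K a b) (b k))"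
      using prod.remove[OF finK iK] by simp
    also have "(\<Prod>k\<in>K - {i}. g' k (ovr K a b) (b k)) = (\<Prod>j\<in>{..<n} - Nd Ed i - {i}. pol j s (restrict (ovr K a b) (Nd Ed j)) (ovr K a b j))"
      unfolding K_def by (rule prod.cong) (auto simp: g'_def gp_def ovr_def)
    finally show ?thesis using iK by (simp add: g'_def ovr_def)
  qed
  have step1: "exp_dev n A Ed pol s i x q Q = Exq A K a g' Q"
    unfolding exp_dev_def seteq
    by (subst sum.reindex[OF inj]) (simp add: Exq_def wt)
  have step2: "Exq A K a g' Q = Exq A K a g' (\<lambda>a'. L a' + F i a')"
    by (rule Exq_cong_f) (use ovin Qd F0_split[of i] i in \<open>auto simp: L_def\<close>)
  have Ksplit: "K = K1 \<union> {i..<n}" unfolding K_def K1_def using NdI i by auto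
  have depK1: "dep_lt g' k" if "k \<in> K1" for k
    using that dep_upd[of k i] gp_dep unfolding K1_def g'_def by auto
  have step3: "Exq A K a g' (\<lambda>a'. L a' + F i a') = Exq A K1 a g' (\<lambda>a'. Exq A {i..<n} a' g' (\<lambda>a''. L a'' + F i a''))"
    unfolding Ksplit by (rule Exq_chain) (use depK1 in \<open>auto simp: K1_def\<close>)
  define S where "S = (\<Sum>c\<in>A i. q c * H i a c)"
  have depi: "dep_lt g' i" unfolding g'_def dep_lt_def by simp
  have step4: "Exq A {i..<n} (ovr K1 a b) g' (\<lambda>a''. L a'' + F i a'') = L (ovr K1 a b) + S"
    if b: "b \<in> PiE K1 A" for b
  proof -
    define a' where "a' = ovr K1 a b"
    have a'in: "a' \<in> PiE {..<n} A"
      using b a i unfolding a'_def K1_def by (auto simp: ovr_def PiE_def Pi_def extensional_def)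
    have agree: "\<forall>j\<in>Nc_set Ec {i..<n}. a' j = a j"
      using NdNc i unfolding a'_def K1_def by (auto simp: ovr_def)
    have "Exq A {i..<n} a' g' (\<lambda>a''. L a'' + F i a'') = Exq A {i..<n} a' g' L + Exq A {i..<n} a' g' (F i)"
      by (rule Exq_add)
    also have "Exq A {i..<n} a' g' L = Exq A {i..<n} a' g' (\<lambda>_. L a' * 1)"
    proof (rule Exq_cong_f)
      fix b' assume "b' \<in> PiE {i..<n} A"
      have "T k (ovr {i..<n} a' b') = T k a'" if "k < i" for k
        by (rule T_le) (use that in \<open>auto simp: ovr_def\<close>)
      then show "L (ovr {i..<n} a' b') = L a' * 1" unfolding L_def by simp
    qed
    also have "\<dots> = L a' * Exq A {i..<n} a' g' (\<lambda>_. 1)"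
      by (rule Exq_cmult)
    also have "Exq A {i..<n} a' g' (\<lambda>_. 1) = 1"
    proof (rule Exq_mass[of _ n])
      show "dep_lt g' k" if "k \<in> {i..<n}" for k
      proof (cases "k = i")
        case True then show ?thesis using depi by simp
      next
        case False then show ?thesis using dep_upd[of k i] gp_dep unfolding g'_def by simp
      qed
      show "is_distrib (A k) (g' k a'')" if "k \<in> {i..<n}" "a'' \<in> PiE {..<n} A" for k a''
      proof -
        have "g' k a'' = (if k = i then q else gp k a'')" by (simp add: g'_def)
        then show ?thesis using q gp_distrib[of k a''] that by simp
      qed
      show "finite {i..<n}" by simp
      show "{i..<n} \<subseteq> {..<n}" by auto
      show "a' \<in> PiE {..<n} A" by (rule a'in)
    qed
    also have "Exq A {i..<n} a' g' (F i) = (\<Sum>c\<in>A i. q c * H i a' c)"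
      unfolding g'_def by (rule Hsum[OF i IH a'in]) (simp add: dep_lt_def)
    also have "\<dots> = S"
      unfolding S_def using H_local[OF i agree] by simp
    finally show ?thesis unfolding a'_def by simp
  qed
  have g'gp: "Exq A K1 a g' f = Exq A K1 a gp f" for f
    by (rule Exq_cong_g) (auto simp: g'_def K1_def)
  have "Exq A K1 a g' (\<lambda>a'. Exq A {i..<n} a' g' (\<lambda>a''. L a'' + F i a'')) = Exq A K1 a gp (\<lambda>a'. L a' + S * 1)"
    unfolding g'gp by (rule Exq_cong_f) (use step4 in simp)
  also have "\<dots> = Exq A K1 a gp L + S * Exq A K1 a gp (\<lambda>_. 1)"
    by (simp add: Exq_add Exq_cmult[of _ _ _ _ S "\<lambda>_. 1", simplified])
  also have "Exq A K1 a gp (\<lambda>_. 1) = 1"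
    by (rule Exq_mass[of _ n]) (use a i gp_dep gp_distrib in \<open>auto simp: K1_def\<close>)
  finally show ?thesis using step1 step2 step3 unfolding x_def K1_def L_def S_def by simp
qed

lemma E_main:
  assumes lo: "\<forall>i<n. \<forall>x\<in>PiE (Nd Ed i) A. exp_dev n A Ed pol s i x (pol i s x) Q = (SUP q\<in>{q. is_distrib (A i) q}. exp_dev n A Ed pol s i x q Q)"
    and Qd: "\<forall>a\<in>PiE {..<n} A. Q a = F 0 a" and "i \<le> n"
  shows "\<forall>a\<in>PiE {..<n} A. Exq A {i..<n} a gp (F i) = M i a"
  using assms(3)
proof (induction i rule: inc_induct)
  case base then show ?case by simp
next
  case (step i)
  have i: "i < n" using step(2) .
  show ?case
  proof
    fix a assume a: "a \<in> PiE {..<n} A"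
    define x where "x = restrict a (Nd Ed i)"
    have x: "x \<in> PiE (Nd Ed i) A" using restrict_in[OF i a] x_def by simp
    define C where "C = Exq A ({..<i} - Nd Ed i) a gp (\<lambda>a'. \<Sum>k<i. T k a')"
    define S where "S = (\<lambda>q. \<Sum>c\<in>A i. q c * H i a c)"
    have ED: "exp_dev n A Ed pol s i x q Q = C + S q" if "is_distrib (A i) q" for q
      using expdev[OF i step.IH a that Qd] unfolding C_def S_def x_def by simp
    have polx: "pol i s x = gp i a" by (rule ext) (simp add: gp_def x_def)
    have dpol: "is_distrib (A i) (gp i a)" using gp_distrib[OF i a] .
    have fin: "finite (A i)" "A i \<noteq> {}" using finA i by auto
    have bdd: "bdd_above ((\<lambda>q. exp_dev n A Ed pol s i x q Q) ` {q. is_distrib (A i) q})"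
    proof (rule bdd_aboveI2)
      fix q assume "q \<in> {q. is_distrib (A i) q}"
      then have q: "is_distrib (A i) q" by simp
      have "S q \<le> (\<Sum>c\<in>A i. \<bar>H i a c\<bar>)"
        unfolding S_def
      proof (rule sum_mono)
        fix c assume c: "c \<in> A i"
        have q0: "0 \<le> q c" using q c unfolding is_distrib_def by auto
        have q1: "q c \<le> 1" using q c fin member_le_sum[of c "A i" q] unfolding is_distrib_def by auto
        have "q c * H i a c \<le> q c * \<bar>H i a c\<bar>" using q0 by (intro mult_left_mono) auto
        also have "\<dots> \<le> \<bar>H i a c\<bar>" using q0 q1 by (intro mult_left_le_one_le) auto
        finally show "q c * H i a c \<le> \<bar>H i a c\<bar>" .
      qed
      then show "exp_dev n A Ed pol s i x q Q \<le> C + (\<Sum>c\<in>A i. \<bar>H i a c\<bar>)" using ED[OF q] by simp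
    qed
    have ge: "H i a c0 \<le> S (gp i a)" if c0: "c0 \<in> A i" for c0
    proof -
      define d where "d = (\<lambda>c. if c = c0 then 1 else (0::real))"
      have dd: "is_distrib (A i) d" unfolding is_distrib_def d_def using c0 fin by (auto simp: sum.delta)
      have Sd: "S d = H i a c0"
      proof -
        have "S d = (\<Sum>c\<in>A i. if c = c0 then H i a c else 0)"
          unfolding S_def d_def by (rule sum.cong) auto
        also have "\<dots> = H i a c0" using c0 fin by (simp add: sum.delta')
        finally show ?thesis .
      qed
      have "C + S d \<le> (SUP q\<in>{q. is_distrib (A i) q}. exp_dev n A Ed pol s i x q Q)"
        using cSUP_upper[OF _ bdd, of d] dd ED[OF dd] by simp
      also have "\<dots> = exp_dev n A Ed pol s i x (pol i s x) Q" using lo i x by simp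
      also have "\<dots> = C + S (gp i a)" using ED[OF dpol] polx by simp
      finally show ?thesis using Sd by simp
    qed
    have le: "S (gp i a) \<le> Max (H i a ` A i)"
    proof -
      have "S (gp i a) \<le> (\<Sum>c\<in>A i. gp i a c * Max (H i a ` A i))"
        unfolding S_def using dpol fin by (intro sum_mono mult_left_mono) (auto simp: is_distrib_def)
      also have "\<dots> = Max (H i a ` A i)" using dpol by (simp add: sum_distrib_right[symmetric] is_distrib_def)
      finally show ?thesis .
    qed
    have "Exq A {i..<n} a gp (F i) = S (gp i a)"
      using Hsum[OF i step.IH a, of "gp i"] gp_dep unfolding S_def by simp
    also have "\<dots> = Max (H i a ` A i)"
      using le ge fin by (intro antisym) (auto simp: Max_le_iff)
    also have "\<dots> = M i a" using M_step[OF i] by simp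
    finally show "Exq A {i..<n} a gp (F i) = M i a" .
  qed
qed

lemma PiE_ne: "PiE {..<n} A \<noteq> {}"
  using finA by (simp add: PiE_eq_empty_iff)

lemma pi_exq:
  assumes a0: "a0 \<in> PiE {..<n} A"
  shows "Exq A {..<n} a0 gp f = (\<Sum>b\<in>PiE {..<n} A. joint_pol n Ed pol s b * f b)"
proof -
  have ov: "ovr {..<n} a0 b = b" if "b \<in> PiE {..<n} A" for b
    using that a0 by (auto simp: ovr_def PiE_def extensional_def)
  show ?thesis unfolding Exq_def joint_pol_def
    by (rule sum.cong) (auto simp: ov gp_def)
qed

lemma pi_sum1: "(\<Sum>b\<in>PiE {..<n} A. joint_pol n Ed pol s b) = 1"
proof -
  obtain a0 where a0: "a0 \<in> PiE {..<n} A" using PiE_ne by blast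
  have "Exq A {..<n} a0 gp (\<lambda>_. 1) = 1"
    by (rule Exq_mass[of _ n]) (use a0 gp_dep gp_distrib in auto)
  then show ?thesis using pi_exq[OF a0, of "\<lambda>_. 1"] by simp
qed

lemma pi_nonneg: "b \<in> PiE {..<n} A \<Longrightarrow> 0 \<le> joint_pol n Ed pol s b"
  unfolding joint_pol_def
proof (rule prod_nonneg)
  fix j assume b: "b \<in> PiE {..<n} A" and j: "j \<in> {..<n}"
  have "is_distrib (A j) (gp j b)" using gp_distrib j b by auto
  moreover have "b j \<in> A j" using b j by auto
  ultimately show "0 \<le> pol j s (restrict b (Nd Ed j)) (b j)"
    unfolding is_distrib_def gp_def by auto
qed

lemma greedy:
  assumes lo: "\<forall>i<n. \<forall>x\<in>PiE (Nd Ed i) A. exp_dev n A Ed pol s i x (pol i s x) Q = (SUP q\<in>{q. is_distrib (A i) q}. exp_dev n A Ed pol s i x q Q)"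
    and Qd: "\<forall>a\<in>PiE {..<n} A. Q a = F 0 a"
  shows "(\<Sum>b\<in>PiE {..<n} A. joint_pol n Ed pol s b * Q b) = Max (Q ` PiE {..<n} A)"
proof -
  obtain a0 where a0: "a0 \<in> PiE {..<n} A" using PiE_ne by blast
  have fin: "finite (PiE {..<n} A)" using finA by (intro finite_PiE) auto
  have "(\<Sum>b\<in>PiE {..<n} A. joint_pol n Ed pol s b * Q b) = Exq A {..<n} a0 gp Q"
    using pi_exq[OF a0] by simp
  also have "\<dots> = Exq A {0..<n} a0 gp (F 0)"
    unfolding atLeast0LessThan[symmetric] by (rule Exq_cong_f) (use Qd a0 in \<open>auto simp: ovr_def PiE_def Pi_def extensional_def\<close>)
  also have "\<dots> = M 0 a0" using E_main[OF lo Qd, of 0] a0 by simp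
  finally have eq: "(\<Sum>b\<in>PiE {..<n} A. joint_pol n Ed pol s b * Q b) = M 0 a0" .
  have "Q b \<le> M 0 a0" if b: "b \<in> PiE {..<n} A" for b
  proof -
    have "ovr {0..<n} a0 b = b" using b a0 by (auto simp: ovr_def PiE_def extensional_def)
    moreover have "F 0 (ovr {0..<n} a0 b) \<le> M 0 a0"
      using M_ge[of 0] a0 b by (auto simp: PiE_def Pi_def)
    moreover have "Q b = F 0 b" using Qd b by blast
    ultimately show ?thesis by simp
  qed
  then have "Max (Q ` PiE {..<n} A) \<le> M 0 a0" using fin PiE_ne by (simp add: Max_le_iff)
  moreover have "(\<Sum>b\<in>PiE {..<n} A. joint_pol n Ed pol s b * Q b) \<le> Max (Q ` PiE {..<n} A)"
  proof -
    have "(\<Sum>b\<in>PiE {..<n} A. joint_pol n Ed pol s b * Q b) \<le> (\<Sum>b\<in>PiE {..<n} A. joint_pol n Ed pol s b * Max (Q ` PiE {..<n} A))"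
      using fin pi_nonneg by (intro sum_mono mult_left_mono) auto
    also have "\<dots> = Max (Q ` PiE {..<n} A)" using pi_sum1 by (simp add: sum_distrib_right[symmetric])
    finally show ?thesis .
  qed
  ultimately show ?thesis using eq by simp
qed

lemma D_eq: "(\<Sum>i<n. Qi i (a i)) + (\<Sum>(i,j)\<in>Ec. Qij i j (a i) (a j)) = F 0 a"
proof -
  have finE: "finite Ec"
  proof (rule finite_subset)
    show "Ec \<subseteq> {..<n} \<times> {..<n}" using ug unfolding ugraph_def by auto
  qed simp
  have img: "(\<lambda>e. max (fst e) (snd e)) ` Ec \<subseteq> {..<n}" using ug unfolding ugraph_def by auto
  have "(\<Sum>k<n. \<Sum>e\<in>{e\<in>Ec. max (fst e) (snd e) = k}. Qij (fst e) (snd e) (a (fst e)) (a (snd e)))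
      = (\<Sum>e\<in>Ec. Qij (fst e) (snd e) (a (fst e)) (a (snd e)))"
    using sum.group[OF finE _ img, of "\<lambda>e. Qij (fst e) (snd e) (a (fst e)) (a (snd e))"] by simp
  also have "\<dots> = (\<Sum>(i,j)\<in>Ec. Qij i j (a i) (a j))" by (simp add: split_def)
  finally show ?thesis unfolding F_def T_def by (simp add: sum.distrib atLeast0LessThan)
qed

lemma greedy':
  assumes lo: "\<forall>i<n. \<forall>x\<in>PiE (Nd Ed i) A. exp_dev n A Ed pol s i x (pol i s x) Q = (SUP q\<in>{q. is_distrib (A i) q}. exp_dev n A Ed pol s i x q Q)"
    and Qd: "\<forall>a\<in>PiE {..<n} A. Q a = (\<Sum>i<n. Qi i (a i)) + (\<Sum>(i,j)\<in>Ec. Qij i j (a i) (a j))"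
  shows "(\<Sum>b\<in>PiE {..<n} A. joint_pol n Ed pol s b * Q b) = Max (Q ` PiE {..<n} A)"
  by (rule greedy[OF lo]) (use Qd D_eq in auto)

end

lemma max_diff:
  fixes f g :: "'a \<Rightarrow> real"
  assumes "finite S" "S \<noteq> {}" "\<forall>a\<in>S. \<bar>f a - g a\<bar> \<le> c"
  shows "\<bar>Max (f ` S) - Max (g ` S)\<bar> \<le> c"
proof -
  have "Max (f ` S) \<in> f ` S" using assms by (intro Max_in) auto
  then obtain a1 where a1: "a1 \<in> S" "Max (f ` S) = f a1" by auto
  have "Max (g ` S) \<in> g ` S" using assms by (intro Max_in) auto
  then obtain a2 where a2: "a2 \<in> S" "Max (g ` S) = g a2" by auto
  have "f a1 \<le> g a1 + c" using assms a1 by auto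
  also have "g a1 \<le> Max (g ` S)" using assms a1 by auto
  finally have 1: "Max (f ` S) \<le> Max (g ` S) + c" using a1 by simp
  have "g a2 \<le> f a2 + c" using assms a2 by auto
  also have "f a2 \<le> Max (f ` S)" using assms a2 by auto
  finally have 2: "Max (g ` S) \<le> Max (f ` S) + c" using a2 by simp
  show ?thesis using 1 2 by linarith
qed

lemma Vstar_unique:
  fixes P :: "'s::finite \<Rightarrow> (nat \<Rightarrow> 'b) \<Rightarrow> 's \<Rightarrow> real"
  assumes mg: "markov_game n A P \<gamma>" and fp: "\<forall>s. V s = bellman_opt n A P r \<gamma> V s"
  shows "Vstar n A P r \<gamma> = V"
  unfolding Vstar_def
proof (rule the_equality)
  show "\<forall>s. V s = bellman_opt n A P r \<gamma> V s" by (rule fp)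
next
  fix W assume fw: "\<forall>s. W s = bellman_opt n A P r \<gamma> W s"
  have finA: "\<forall>i<n. finite (A i) \<and> A i \<noteq> {}" and Pd: "\<forall>s. \<forall>a\<in>joint_actions n A. is_distrib UNIV (P s a)"
    and g0: "0 \<le> \<gamma>" and g1: "\<gamma> < 1" using mg unfolding markov_game_def by auto
  have finJ: "finite (joint_actions n A)" unfolding joint_actions_def using finA by (intro finite_PiE) auto
  have neJ: "joint_actions n A \<noteq> {}" unfolding joint_actions_def using finA by (simp add: PiE_eq_empty_iff)
  define \<delta> where "\<delta> = Max (range (\<lambda>s. \<bar>W s - V s\<bar>))"
  have dge: "\<bar>W s - V s\<bar> \<le> \<delta>" for s unfolding \<delta>_def by simp
  have step: "\<bar>W s - V s\<bar> \<le> \<gamma> * \<delta>" for s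
  proof -
    have "\<bar>(r s a + \<gamma> * (\<Sum>s'\<in>UNIV. P s a s' * W s')) - (r s a + \<gamma> * (\<Sum>s'\<in>UNIV. P s a s' * V s'))\<bar> \<le> \<gamma> * \<delta>"
      if a: "a \<in> joint_actions n A" for a
    proof -
      have pd: "\<forall>s'. 0 \<le> P s a s'" "(\<Sum>s'\<in>UNIV. P s a s') = 1" using Pd a unfolding is_distrib_def by auto
      have "\<bar>(\<Sum>s'\<in>UNIV. P s a s' * W s') - (\<Sum>s'\<in>UNIV. P s a s' * V s')\<bar> = \<bar>\<Sum>s'\<in>UNIV. P s a s' * (W s' - V s')\<bar>"
        by (simp add: sum_subtractf right_diff_distrib)
      also have "\<dots> \<le> (\<Sum>s'\<in>UNIV. \<bar>P s a s' * (W s' - V s')\<bar>)" by (rule sum_abs)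
      also have "\<dots> \<le> (\<Sum>s'\<in>UNIV. P s a s' * \<delta>)"
        using pd dge by (intro sum_mono) (simp add: abs_mult mult_left_mono)
      also have "\<dots> = \<delta>" using pd by (simp add: sum_distrib_right[symmetric])
      finally have "\<bar>(\<Sum>s'\<in>UNIV. P s a s' * W s') - (\<Sum>s'\<in>UNIV. P s a s' * V s')\<bar> \<le> \<delta>" .
      then have "\<gamma> * \<bar>(\<Sum>s'\<in>UNIV. P s a s' * W s') - (\<Sum>s'\<in>UNIV. P s a s' * V s')\<bar> \<le> \<gamma> * \<delta>"
        by (rule mult_left_mono[OF _ g0])
      then show ?thesis using g0 by (simp add: abs_mult right_diff_distrib[symmetric])
    qed
    then have "\<bar>bellman_opt n A P r \<gamma> W s - bellman_opt n A P r \<gamma> V s\<bar> \<le> \<gamma> * \<delta>"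
      unfolding bellman_opt_def by (intro max_diff finJ neJ) auto
    then show ?thesis using fw fp by metis
  qed
  have "\<delta> \<le> \<gamma> * \<delta>"
  proof -
    have "\<delta> \<in> range (\<lambda>s. \<bar>W s - V s\<bar>)" unfolding \<delta>_def by (rule Max_in) auto
    then obtain s where "\<delta> = \<bar>W s - V s\<bar>" by auto
    then show ?thesis using step by simp
  qed
  moreover have "0 \<le> \<delta>" using dge[of undefined] by simp
  ultimately have "\<delta> = 0"
  proof -
    assume a1: "\<delta> \<le> \<gamma> * \<delta>" and a2: "0 \<le> \<delta>"
    have "(1 - \<gamma>) * \<delta> \<le> 0" using a1 by (simp add: algebra_simps)
    then have "\<delta> \<le> 0" using g1 by (auto simp: mult_le_0_iff)
    then show ?thesis using a2 by simp
  qed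
  then show "W = V" using dge by (intro ext) (metis abs_le_zero_iff eq_iff_diff_eq_0)
qed

lemma sum_ind1: "finite S \<Longrightarrow> y \<in> S \<Longrightarrow> (\<Sum>x\<in>S. (if x = y then 1 else 0) * f x) = (f y::real)"
proof -
  assume "finite S" "y \<in> S"
  have "(\<Sum>x\<in>S. (if x = y then 1 else 0) * f x) = (\<Sum>x\<in>S. if x = y then f x else 0)"
    by (rule sum.cong) auto
  then show ?thesis using \<open>finite S\<close> \<open>y \<in> S\<close> by (simp add: sum.delta')
qed

lemma sum_ind2: "finite S \<Longrightarrow> y \<in> S \<Longrightarrow> (\<Sum>x\<in>S. f x * (if y = x then 1 else 0)) = (f y::real)"
proof -
  assume "finite S" "y \<in> S"
  have "(\<Sum>x\<in>S. f x * (if y = x then 1 else 0)) = (\<Sum>x\<in>S. (if x = y then 1 else 0) * f x)"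
    by (rule sum.cong) auto
  then show ?thesis using sum_ind1[OF \<open>finite S\<close> \<open>y \<in> S\<close>] by simp
qed

lemma Vpi_bellman:
  fixes P :: "'s::finite \<Rightarrow> (nat \<Rightarrow> 'b) \<Rightarrow> 's \<Rightarrow> real" and \<pi> :: "'s \<Rightarrow> (nat \<Rightarrow> 'b) \<Rightarrow> real"
  assumes mg: "markov_game n A P \<gamma>"
    and ps: "\<And>s. (\<Sum>a\<in>joint_actions n A. \<pi> s a) = 1"
    and pn: "\<And>s a. a \<in> joint_actions n A \<Longrightarrow> 0 \<le> \<pi> s a"
  shows "Vpi n A P r \<gamma> \<pi> s0 = (\<Sum>a\<in>joint_actions n A. \<pi> s0 a * Qpi n A P r \<gamma> \<pi> s0 a)"
proof -
  define J where "J = joint_actions n A"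
  have Pd: "\<forall>s. \<forall>a\<in>J. is_distrib UNIV (P s a)" and g0: "0 \<le> \<gamma>" and g1: "\<gamma> < 1"
    using mg unfolding markov_game_def J_def by auto
  define Mt where "Mt s s' = (\<Sum>a\<in>J. \<pi> s a * P s a s')" for s s'
  define R where "R s = (\<Sum>a\<in>J. \<pi> s a * r s a)" for s
  define d where "d = state_dist n A P \<pi>"
  define e where "e s0 t = (\<Sum>s\<in>UNIV. d s0 t s * R s)" for s0 t
  have dSuc: "d s0 (Suc t) s' = (\<Sum>s\<in>UNIV. d s0 t s * Mt s s')" for s0 t s'
    unfolding d_def Mt_def J_def by simp
  have d0: "d s0 0 s = (if s = s0 then 1 else 0)" for s0 s unfolding d_def by simp
  have Mn: "0 \<le> Mt s s'" for s s'
    unfolding Mt_def using Pd pn J_def by (auto intro!: sum_nonneg simp: is_distrib_def)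
  have Ms: "(\<Sum>s'\<in>UNIV. Mt s s') = 1" for s
  proof -
    have "(\<Sum>s'\<in>UNIV. Mt s s') = (\<Sum>a\<in>J. \<pi> s a * (\<Sum>s'\<in>UNIV. P s a s'))"
      unfolding Mt_def by (subst sum.swap) (simp add: sum_distrib_left)
    also have "\<dots> = (\<Sum>a\<in>J. \<pi> s a)" using Pd by (auto intro!: sum.cong simp: is_distrib_def)
    finally show ?thesis using ps J_def by simp
  qed
  have dprop: "(\<forall>s. 0 \<le> d s0 t s) \<and> (\<Sum>s\<in>UNIV. d s0 t s) = 1" for s0 t
  proof (induction t)
    case 0 then show ?case by (simp add: d0)
  next
    case (Suc t)
    have "(\<Sum>s'\<in>UNIV. d s0 (Suc t) s') = (\<Sum>s\<in>UNIV. d s0 t s * (\<Sum>s'\<in>UNIV. Mt s s'))"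
      unfolding dSuc by (subst sum.swap) (simp add: sum_distrib_left)
    then show ?case using Suc Ms Mn unfolding dSuc by (auto intro!: sum_nonneg)
  qed
  have shift: "d s0 (Suc t) s = (\<Sum>s1\<in>UNIV. Mt s0 s1 * d s1 t s)" for s0 t s
  proof (induction t arbitrary: s)
    case 0 then show ?case unfolding dSuc d0 using sum_ind1[of UNIV s0 "\<lambda>x. Mt x s"] sum_ind2[of UNIV s "Mt s0"] by simp
  next
    case (Suc t)
    have "d s0 (Suc (Suc t)) s = (\<Sum>s'\<in>UNIV. (\<Sum>s1\<in>UNIV. Mt s0 s1 * d s1 t s') * Mt s' s)"
      unfolding dSuc[of s0 "Suc t"] using Suc by simp
    also have "\<dots> = (\<Sum>s1\<in>UNIV. Mt s0 s1 * (\<Sum>s'\<in>UNIV. d s1 t s' * Mt s' s))"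
      unfolding sum_distrib_right sum_distrib_left mult.assoc by (rule sum.swap)
    also have "\<dots> = (\<Sum>s1\<in>UNIV. Mt s0 s1 * d s1 (Suc t) s)" unfolding dSuc ..
    finally show ?case .
  qed
  define B where "B = (\<Sum>s\<in>UNIV. \<bar>R s\<bar>)"
  have eb: "\<bar>e s0 t\<bar> \<le> B" for s0 t
  proof -
    have "\<bar>e s0 t\<bar> \<le> (\<Sum>s\<in>UNIV. \<bar>d s0 t s * R s\<bar>)" unfolding e_def by (rule sum_abs)
    also have "\<dots> \<le> B" unfolding B_def
    proof (rule sum_mono)
      fix s
      have "d s0 t s \<le> 1" using dprop[of s0 t] member_le_sum[of s UNIV "d s0 t"] by auto
      then show "\<bar>d s0 t s * R s\<bar> \<le> \<bar>R s\<bar>" using dprop[of s0 t]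
        by (simp add: abs_mult mult_left_le_one_le)
    qed
    finally show ?thesis .
  qed
  have summ: "summable (\<lambda>t. \<gamma> ^ t * e s0 t)" for s0
  proof (rule summable_comparison_test')
    show "summable (\<lambda>t. B * \<gamma> ^ t)" using g0 g1 by (intro summable_mult summable_geometric) simp
    show "norm (\<gamma> ^ t * e s0 t) \<le> B * \<gamma> ^ t" for t
    proof -
      have "\<gamma> ^ t * \<bar>e s0 t\<bar> \<le> \<gamma> ^ t * B" using eb[of s0 t] g0 by (intro mult_left_mono) auto
      then show ?thesis using g0 by (simp add: abs_mult mult.commute)
    qed
  qed
  have V: "Vpi n A P r \<gamma> \<pi> s = (\<Sum>t. \<gamma> ^ t * e s t)" for s
    unfolding Vpi_def e_def d_def R_def J_def ..
  have eSuc: "e s0 (Suc t) = (\<Sum>s1\<in>UNIV. Mt s0 s1 * e s1 t)" for t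
    unfolding e_def shift sum_distrib_right sum_distrib_left mult.assoc by (rule sum.swap)
  have e0: "e s0 0 = R s0" unfolding e_def d0 using sum_ind1[of UNIV s0 R] by simp
  have "(\<Sum>t. \<gamma> ^ t * e s0 t) = \<gamma> ^ 0 * e s0 0 + (\<Sum>t. \<gamma> ^ Suc t * e s0 (Suc t))"
    using suminf_split_head[OF summ[of s0]] by simp
  also have "(\<Sum>t. \<gamma> ^ Suc t * e s0 (Suc t)) = (\<Sum>t. \<gamma> * (\<Sum>s1\<in>UNIV. Mt s0 s1 * (\<gamma> ^ t * e s1 t)))"
    unfolding eSuc by (simp add: sum_distrib_left mult.assoc mult.left_commute)
  also have "\<dots> = \<gamma> * (\<Sum>t. \<Sum>s1\<in>UNIV. Mt s0 s1 * (\<gamma> ^ t * e s1 t))"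
    by (rule suminf_mult) (intro summable_sum summable_mult summ)
  also have "(\<Sum>t. \<Sum>s1\<in>UNIV. Mt s0 s1 * (\<gamma> ^ t * e s1 t)) = (\<Sum>s1\<in>UNIV. \<Sum>t. Mt s0 s1 * (\<gamma> ^ t * e s1 t))"
    by (rule suminf_sum) (intro summable_mult summ)
  also have "\<dots> = (\<Sum>s1\<in>UNIV. Mt s0 s1 * Vpi n A P r \<gamma> \<pi> s1)"
    unfolding V by (intro sum.cong refl suminf_mult summ)
  finally have VB: "Vpi n A P r \<gamma> \<pi> s0 = R s0 + \<gamma> * (\<Sum>s1\<in>UNIV. Mt s0 s1 * Vpi n A P r \<gamma> \<pi> s1)"
    unfolding V[of s0] e0 by simp
  have "(\<Sum>a\<in>J. \<pi> s0 a * Qpi n A P r \<gamma> \<pi> s0 a)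
      = R s0 + \<gamma> * (\<Sum>a\<in>J. \<pi> s0 a * (\<Sum>s'\<in>UNIV. P s0 a s' * Vpi n A P r \<gamma> \<pi> s'))"
    unfolding Qpi_def R_def by (simp add: distrib_left sum.distrib sum_distrib_left mult.left_commute)
  also have "(\<Sum>a\<in>J. \<pi> s0 a * (\<Sum>s'\<in>UNIV. P s0 a s' * Vpi n A P r \<gamma> \<pi> s'))
      = (\<Sum>s1\<in>UNIV. Mt s0 s1 * Vpi n A P r \<gamma> \<pi> s1)"
    unfolding Mt_def sum_distrib_left sum_distrib_right mult.assoc by (rule sum.swap)
  finally show ?thesis using VB J_def by simp
qed

theorem theorem1:
  fixes n :: nat and A :: "nat \<Rightarrow> 'b set"
    and P :: "'s::finite \<Rightarrow> (nat \<Rightarrow> 'b) \<Rightarrow> 's \<Rightarrow> real"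
    and r :: "'s \<Rightarrow> (nat \<Rightarrow> 'b) \<Rightarrow> real" and \<gamma> :: real
    and Ed Ec :: "(nat \<times> nat) set"
    and pol :: "nat \<Rightarrow> 's \<Rightarrow> (nat \<Rightarrow> 'b) \<Rightarrow> 'b \<Rightarrow> real"
  assumes "markov_game n A P \<gamma>"
    and "adg n Ed"
    and "policy_assoc n A Ed pol"
    and "locally_optimal n A Ed pol (Qpi n A P r \<gamma> (joint_pol n Ed pol))"
    and "ugraph n Ec"
    and "is_coord_graph n A Ec (Qpi n A P r \<gamma> (joint_pol n Ed pol))"
    and "\<forall>i<n. Nd Ed i = Nc_set Ec {i..<n}"
  shows "\<forall>s. Vpi n A P r \<gamma> (joint_pol n Ed pol) s = Vstar n A P r \<gamma> s"
proof -
  have finA: "\<forall>i<n. finite (A i) \<and> A i \<noteq> {}" using assms(1) unfolding markov_game_def by auto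
  define \<pi> where "\<pi> = joint_pol n Ed pol"
  define Q where "Q = Qpi n A P r \<gamma> \<pi>"
  obtain Qi :: "nat \<Rightarrow> 's \<Rightarrow> 'b \<Rightarrow> real" and Qij :: "nat \<Rightarrow> nat \<Rightarrow> 's \<Rightarrow> 'b \<Rightarrow> 'b \<Rightarrow> real"
    where cg: "\<forall>s. \<forall>a\<in>joint_actions n A. Q s a = (\<Sum>i<n. Qi i s (a i)) + (\<Sum>(i,j)\<in>Ec. Qij i j s (a i) (a j))"
    using assms(6) unfolding is_coord_graph_def Q_def \<pi>_def by blast
  have lo: "\<forall>i<n. \<forall>x\<in>PiE (Nd Ed i) A. exp_dev n A Ed pol s i x (pol i s x) (Q s) = (SUP q\<in>{q. is_distrib (A i) q}. exp_dev n A Ed pol s i x q (Q s))" for s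
    using assms(4) unfolding locally_optimal_def Q_def \<pi>_def by blast
  have gr: "(\<Sum>b\<in>PiE {..<n} A. joint_pol n Ed pol s b * Q s b) = Max (Q s ` PiE {..<n} A)" for s
    using greedy'[OF finA assms(2,3,5,7), where s = s and Q = "Q s" and Qi = "\<lambda>i. Qi i s" and Qij = "\<lambda>i j. Qij i j s"]
      lo[of s] cg unfolding joint_actions_def by blast
  have ps: "(\<Sum>a\<in>joint_actions n A. \<pi> s a) = 1" for s
    using pi_sum1[OF finA assms(2,3,5,7)] unfolding \<pi>_def joint_actions_def by blast
  have pn: "a \<in> joint_actions n A \<Longrightarrow> 0 \<le> \<pi> s a" for s a
    using pi_nonneg[OF finA assms(2,3,5,7)] unfolding \<pi>_def joint_actions_def by blast
  have fp: "\<forall>s. Vpi n A P r \<gamma> \<pi> s = bellman_opt n A P r \<gamma> (Vpi n A P r \<gamma> \<pi>) s"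
  proof
    fix s
    have "Vpi n A P r \<gamma> \<pi> s = (\<Sum>a\<in>joint_actions n A. \<pi> s a * Q s a)"
      unfolding Q_def by (rule Vpi_bellman[OF assms(1) ps pn])
    also have "\<dots> = Max (Q s ` joint_actions n A)"
      using gr[of s] unfolding \<pi>_def joint_actions_def by simp
    also have "\<dots> = bellman_opt n A P r \<gamma> (Vpi n A P r \<gamma> \<pi>) s"
      unfolding bellman_opt_def Q_def Qpi_def ..
    finally show "Vpi n A P r \<gamma> \<pi> s = bellman_opt n A P r \<gamma> (Vpi n A P r \<gamma> \<pi>) s" .
  qed
  have "Vstar n A P r \<gamma> = Vpi n A P r \<gamma> \<pi>"
    by (rule Vstar_unique[OF assms(1) fp])
  then show ?thesis unfolding \<pi>_def by simp
qed

end
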